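(* Let $H=(V,E)$ be a $k$-uniform $k$-partite hypergraph with vertex partition $V=V_1\sqcup\dots\sqcup V_k$. If there exists an index $i$ such that every vertex $v\in V_i$ lies in exactly two edges of $E$, then the Graver basis of $I_H$ is the unique minimal generating set of $I_H$.
   Context: A hypergraph $H=(V,E)$ has finite vertex set $V$ and a set $E$ of edges, each a nonempty subset of $V$ (no repeated edges). It is $k$-uniform if every edge has exactly $k$ elements, and a $k$-uniform hypergraph is $k$-partite if $V$ can be partitioned into $k$ disjoint subsets $V_1,\dots,V_k$ such that each edge contains exactly one vertex from each $V_i$. For a field $K$, the toric ideal $I_H$ is the kernel of $\phi_H: K[t_e : e\in E]\to K[x_v : v\in V]$, $t_e\mapsto\prod_{v\in e}x_v$. The Graver basis of $I_H$ is the set of primitive binomials of $I_H$, where a binomial $u-v\in I_H$ ($u,v$ monomials) is primitive if there is no other binomial $u'-v'\in I_H$ with $u'\mid u$ and $v'\mid v$. "Unique minimal generating set" means the Graver basis generates $I_H$ minimally and every minimal binomial generating set of $I_H$ coincides with it up to signs. *)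

theory Defs
  imports Main "HOL-Library.Poly_Mapping"
begin

text \<open>Hypergraph H = (V, E): vertex set V = UNIV of a finite type 'v, edges indexed
  injectively by a finite type 'e via E :: 'e => 'v set.  Variables t_e of the
  polynomial ring K[t_e : e in E] are indexed by 'e; x_v by 'v.
  Polynomials over a field 'k in variables indexed by 'a are elements of
  ('a =>0 nat) =>0 'k (monomial exponent vector => coefficient).\<close>

definition hypergraph :: "('e::finite \<Rightarrow> 'v::finite set) \<Rightarrow> bool" where
  "hypergraph E \<longleftrightarrow> inj E \<and> (\<forall>e. E e \<noteq> {})"

definition uniform_partite ::
  "nat \<Rightarrow> ('e::finite \<Rightarrow> 'v::finite set) \<Rightarrow> (nat \<Rightarrow> 'v set) \<Rightarrow> bool" where
  "uniform_partite k E P \<longleftrightarrow>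
     (\<forall>e. card (E e) = k) \<and>
     (\<forall>i<k. \<forall>j<k. i \<noteq> j \<longrightarrow> P i \<inter> P j = {}) \<and>
     (\<Union>i<k. P i) = UNIV \<and>
     (\<forall>e. \<forall>i<k. card (E e \<inter> P i) = 1)"

text \<open>Exponent vector (in the x_v) of phi_H applied to the monomial t^a.\<close>
definition toric_deg :: "('e::finite \<Rightarrow> 'v::finite set) \<Rightarrow> ('e \<Rightarrow>\<^sub>0 nat) \<Rightarrow> ('v \<Rightarrow>\<^sub>0 nat)" where
  "toric_deg E a = (\<Sum>e\<in>UNIV. \<Sum>v\<in>E e. Poly_Mapping.single v (Poly_Mapping.lookup a e))"

text \<open>The K-algebra homomorphism phi_H : t_e |-> prod_{v in e} x_v.\<close>
definition toric_map ::
  "('e::finite \<Rightarrow> 'v::finite set) \<Rightarrow> (('e \<Rightarrow>\<^sub>0 nat) \<Rightarrow>\<^sub>0 'k::field) \<Rightarrow> (('v \<Rightarrow>\<^sub>0 nat) \<Rightarrow>\<^sub>0 'k)" where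
  "toric_map E p = (\<Sum>a\<in>Poly_Mapping.keys p. Poly_Mapping.single (toric_deg E a) (Poly_Mapping.lookup p a))"

definition toric_ideal ::
  "('e::finite \<Rightarrow> 'v::finite set) \<Rightarrow> (('e \<Rightarrow>\<^sub>0 nat) \<Rightarrow>\<^sub>0 'k::field) set" where
  "toric_ideal E = {p. toric_map E p = 0}"

definition mono :: "('e \<Rightarrow>\<^sub>0 nat) \<Rightarrow> (('e \<Rightarrow>\<^sub>0 nat) \<Rightarrow>\<^sub>0 'k::field)" where
  "mono a = Poly_Mapping.single a 1"

definition binomials :: "(('e \<Rightarrow>\<^sub>0 nat) \<Rightarrow>\<^sub>0 'k::field) set" where
  "binomials = {mono a - mono b | a b. a \<noteq> b}"

definition primitive_pair ::
  "('e::finite \<Rightarrow> 'v::finite set) \<Rightarrow> ('e \<Rightarrow>\<^sub>0 nat) \<Rightarrow> ('e \<Rightarrow>\<^sub>0 nat) \<Rightarrow> 'k::field itself \<Rightarrow> bool" where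
  "primitive_pair E a b (_::'k itself) \<longleftrightarrow>
     a \<noteq> b \<and> (mono a - mono b :: ('e \<Rightarrow>\<^sub>0 nat) \<Rightarrow>\<^sub>0 'k) \<in> toric_ideal E \<and>
     \<not> (\<exists>a' b'. a' \<noteq> b' \<and> (a', b') \<noteq> (a, b) \<and>
            (mono a' - mono b' :: ('e \<Rightarrow>\<^sub>0 nat) \<Rightarrow>\<^sub>0 'k) \<in> toric_ideal E \<and>
            (mono a' :: ('e \<Rightarrow>\<^sub>0 nat) \<Rightarrow>\<^sub>0 'k) dvd mono a \<and>
            (mono b' :: ('e \<Rightarrow>\<^sub>0 nat) \<Rightarrow>\<^sub>0 'k) dvd mono b)"

definition graver_basis ::
  "('e::finite \<Rightarrow> 'v::finite set) \<Rightarrow> (('e \<Rightarrow>\<^sub>0 nat) \<Rightarrow>\<^sub>0 'k::field) set" where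
  "graver_basis E = {mono a - mono b | a b. primitive_pair E a b TYPE('k)}"

definition ideal_gen :: "'a::comm_ring_1 set \<Rightarrow> 'a set" where
  "ideal_gen S = {x. \<exists>F r. finite F \<and> F \<subseteq> S \<and> x = (\<Sum>s\<in>F. r s * s)}"

definition minimal_generating_set :: "'a::comm_ring_1 set \<Rightarrow> 'a set \<Rightarrow> bool" where
  "minimal_generating_set B I \<longleftrightarrow> ideal_gen B = I \<and> (\<forall>B' \<subset> B. ideal_gen B' \<noteq> I)"

text \<open>G (closed under sign) generates I minimally (up to signs), and every minimal
  binomial generating set of I coincides with G up to signs.\<close>
definition unique_minimal_generating_set :: "'a::comm_ring_1 set \<Rightarrow> 'a set \<Rightarrow> 'a set \<Rightarrow> bool" where
  "unique_minimal_generating_set G I Bin \<longleftrightarrow>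
     ideal_gen G = I \<and>
     (\<forall>g\<in>G. ideal_gen (G - {g, - g}) \<noteq> I) \<and>
     (\<forall>B. B \<subseteq> Bin \<and> minimal_generating_set B I \<longrightarrow>
          (\<forall>b\<in>B. b \<in> G \<or> - b \<in> G) \<and> (\<forall>g\<in>G. g \<in> B \<or> - g \<in> B))"

end

theory Submission imports Defs "HOL.Modules" begin

interpretation rm: module "(*) :: 'a::comm_ring_1 \<Rightarrow> 'a \<Rightarrow> 'a"
  by standard (simp_all add: algebra_simps)

lemma ideal_gen_span: "ideal_gen S = rm.span S"
  unfolding ideal_gen_def rm.span_explicit by auto

lemma deg_add: "toric_deg E (a + b) = toric_deg E a + toric_deg E b"
  by (simp add: toric_deg_def lookup_add single_add sum.distrib)

lemma deg_zero: "toric_deg E 0 = 0"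
  by (simp add: toric_deg_def)

lemma lookup_deg:
  fixes E :: "'e::finite \<Rightarrow> 'v::finite set"
  shows "Poly_Mapping.lookup (toric_deg E a) v = (\<Sum>e\<in>{e. v \<in> E e}. Poly_Mapping.lookup a e)"
proof -
  have "Poly_Mapping.lookup (toric_deg E a) v = (\<Sum>e\<in>UNIV. if v \<in> E e then Poly_Mapping.lookup a e else 0)"
    unfolding toric_deg_def lookup_sum by (intro sum.cong refl) (simp add: lookup_single when_def)
  also have "\<dots> = (\<Sum>e\<in>{e. v \<in> E e}. Poly_Mapping.lookup a e)"
    by (simp add: sum.If_cases)
  finally show ?thesis .
qed

lemma lookup_tm:
  fixes E :: "'e::finite \<Rightarrow> 'v::finite set" and p :: "('e \<Rightarrow>\<^sub>0 nat) \<Rightarrow>\<^sub>0 'k::field"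
  assumes "finite S" "Poly_Mapping.keys p \<subseteq> S"
  shows "Poly_Mapping.lookup (toric_map E p) d = (\<Sum>a\<in>S. if toric_deg E a = d then Poly_Mapping.lookup p a else 0)"
proof -
  have "Poly_Mapping.lookup (toric_map E p) d = (\<Sum>a\<in>Poly_Mapping.keys p. if toric_deg E a = d then Poly_Mapping.lookup p a else 0)"
    unfolding toric_map_def lookup_sum by (intro sum.cong refl) (simp add: lookup_single when_def)
  also have "\<dots> = (\<Sum>a\<in>S. if toric_deg E a = d then Poly_Mapping.lookup p a else 0)"
    using assms by (intro sum.mono_neutral_left) (auto simp: in_keys_iff)
  finally show ?thesis .
qed

lemma tm_add: "toric_map E (p + q) = toric_map E p + toric_map E q"
proof (rule poly_mapping_eqI)
  fix d
  let ?S = "Poly_Mapping.keys p \<union> Poly_Mapping.keys q"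
  have k: "Poly_Mapping.keys (p+q) \<subseteq> ?S" by (rule keys_add)
  show "Poly_Mapping.lookup (toric_map E (p + q)) d = Poly_Mapping.lookup (toric_map E p + toric_map E q) d"
    unfolding lookup_add lookup_tm[OF _ k, simplified] lookup_tm[of ?S p, simplified] lookup_tm[of ?S q, simplified]
    by (auto simp: lookup_add sum.distrib[symmetric] intro!: sum.cong)
qed

lemma tm_zero: "toric_map E 0 = 0"
  by (simp add: toric_map_def)

lemma tm_minus: "toric_map E (p - q) = toric_map E p - toric_map E q"
  by (metis add_diff_cancel diff_add_cancel tm_add)

lemma tm_single: "toric_map E (Poly_Mapping.single a c) = Poly_Mapping.single (toric_deg E a) c"
  by (cases "c = 0") (simp_all add: toric_map_def)

lemma tm_sum: "toric_map E (sum f A) = (\<Sum>x\<in>A. toric_map E (f x))"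
  by (induction A rule: infinite_finite_induct) (simp_all add: tm_zero tm_add)

lemma expansion: "p = (\<Sum>a\<in>Poly_Mapping.keys p. Poly_Mapping.single a (Poly_Mapping.lookup p a))"
proof (rule poly_mapping_eqI)
  fix x
  show "Poly_Mapping.lookup p x = Poly_Mapping.lookup (\<Sum>a\<in>Poly_Mapping.keys p. Poly_Mapping.single a (Poly_Mapping.lookup p a)) x"
    unfolding lookup_sum by (simp add: lookup_single when_def in_keys_iff)
qed

lemma tm_mult: "toric_map E (p * q) = toric_map E p * toric_map E q"
proof -
  have "p * q = (\<Sum>a\<in>Poly_Mapping.keys p. Poly_Mapping.single a (Poly_Mapping.lookup p a)) *
     (\<Sum>b\<in>Poly_Mapping.keys q. Poly_Mapping.single b (Poly_Mapping.lookup q b))"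
    using expansion[of p] expansion[of q] by simp
  also have "\<dots> = (\<Sum>a\<in>Poly_Mapping.keys p. \<Sum>b\<in>Poly_Mapping.keys q.
      Poly_Mapping.single (a + b) (Poly_Mapping.lookup p a * Poly_Mapping.lookup q b))"
    by (simp add: sum_product mult_single)
  finally have "toric_map E (p * q) = (\<Sum>a\<in>Poly_Mapping.keys p. \<Sum>b\<in>Poly_Mapping.keys q.
      Poly_Mapping.single (toric_deg E a + toric_deg E b) (Poly_Mapping.lookup p a * Poly_Mapping.lookup q b))"
    by (simp add: tm_sum tm_single deg_add)
  also have "\<dots> = toric_map E p * toric_map E q"
    unfolding toric_map_def by (simp add: sum_product mult_single)
  finally show ?thesis .
qed

lemma single_diff_eq0: "(Poly_Mapping.single x (1::'k::field) - Poly_Mapping.single y 1 = 0) \<longleftrightarrow> x = y"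
proof
  assume "Poly_Mapping.single x (1::'k) - Poly_Mapping.single y 1 = 0"
  then have "Poly_Mapping.lookup (Poly_Mapping.single x (1::'k) - Poly_Mapping.single y 1) x = 0" by simp
  then show "x = y" by (auto simp: lookup_minus lookup_single when_def split: if_splits)
qed simp

lemma binom_in_T:
  "((mono a - mono b :: ('e::finite \<Rightarrow>\<^sub>0 nat) \<Rightarrow>\<^sub>0 'k::field) \<in> toric_ideal E) \<longleftrightarrow> toric_deg E a = toric_deg E b"
  unfolding toric_ideal_def mono_def
  using single_diff_eq0[of "toric_deg E a" "toric_deg E b", where 'k='k] by (simp add: tm_minus tm_single)

lemma mono_mult: "(mono a :: ('e \<Rightarrow>\<^sub>0 nat) \<Rightarrow>\<^sub>0 'k::field) * mono b = mono (a + b)"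
  unfolding mono_def by (simp add: mult_single)

lemma mono_dvd: "((mono a' :: ('e \<Rightarrow>\<^sub>0 nat) \<Rightarrow>\<^sub>0 'k::field) dvd mono a) \<longleftrightarrow> (\<exists>c. a = a' + c)"
proof
  assume "(mono a' :: ('e \<Rightarrow>\<^sub>0 nat) \<Rightarrow>\<^sub>0 'k::field) dvd mono a"
  then obtain q where q: "(mono a :: ('e \<Rightarrow>\<^sub>0 nat) \<Rightarrow>\<^sub>0 'k::field) = mono a' * q" by (auto simp: dvd_def)
  have "a \<in> Poly_Mapping.keys (mono a :: ('e \<Rightarrow>\<^sub>0 nat) \<Rightarrow>\<^sub>0 'k::field)" by (simp add: mono_def)
  then have "a \<in> Poly_Mapping.keys ((mono a' :: ('e \<Rightarrow>\<^sub>0 nat) \<Rightarrow>\<^sub>0 'k::field) * q)" using q by simp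
  then show "\<exists>c. a = a' + c" using keys_mult[of "mono a' :: ('e \<Rightarrow>\<^sub>0 nat) \<Rightarrow>\<^sub>0 'k::field" q]
    by (auto simp: mono_def)
next
  assume "\<exists>c. a = a' + c"
  then obtain c where "a = a' + c" by auto
  then show "(mono a' :: ('e \<Rightarrow>\<^sub>0 nat) \<Rightarrow>\<^sub>0 'k::field) dvd mono a"
    by (metis dvdI mono_mult)
qed

lemma T_subspace: "rm.subspace (toric_ideal E :: (('e::finite \<Rightarrow>\<^sub>0 nat) \<Rightarrow>\<^sub>0 'k::field) set)"
  unfolding rm.subspace_def toric_ideal_def by (simp add: tm_zero tm_add tm_mult)

definition sz :: "('e::finite \<Rightarrow>\<^sub>0 nat) \<Rightarrow> nat" where
  "sz a = (\<Sum>e\<in>UNIV. Poly_Mapping.lookup a e)"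

lemma sz_add: "sz (a + b) = sz a + sz b"
  by (simp add: sz_def lookup_add sum.distrib)

lemma sz_pos: "a \<noteq> 0 \<Longrightarrow> sz a > 0"
proof -
  assume "a \<noteq> 0"
  then obtain e where "Poly_Mapping.lookup a e \<noteq> 0" by (metis lookup_zero poly_mapping_eqI)
  then show "sz a > 0" unfolding sz_def
    by (metis (mono_tags) finite_class.finite_UNIV gr0I iso_tuple_UNIV_I sum_eq_0_iff)
qed


lemma binom_span:
  fixes E :: "'e::finite \<Rightarrow> 'v::finite set"
  shows "toric_deg E a = toric_deg E b \<Longrightarrow>
    (mono a - mono b :: (('e \<Rightarrow>\<^sub>0 nat) \<Rightarrow>\<^sub>0 'k::field)) \<in> rm.span (graver_basis E)"
proof (induction "sz a + sz b" arbitrary: a b rule: less_induct)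
  case less
  show ?case
  proof (cases "a = b")
    case True then show ?thesis by (simp add: rm.span_zero)
  next
    case ab: False
    show ?thesis
    proof (cases "primitive_pair E a b TYPE('k)")
      case True
      then have "(mono a - mono b :: (('e \<Rightarrow>\<^sub>0 nat) \<Rightarrow>\<^sub>0 'k::field)) \<in> graver_basis E"
        unfolding graver_basis_def by blast
      then show ?thesis by (rule rm.span_base)
    next
      case False
      with ab less.prems obtain a' b' where ab': "a' \<noteq> b'" "(a', b') \<noteq> (a, b)"
        "(mono a' - mono b' :: ('e \<Rightarrow>\<^sub>0 nat) \<Rightarrow>\<^sub>0 'k) \<in> toric_ideal E"
        "(mono a' :: ('e \<Rightarrow>\<^sub>0 nat) \<Rightarrow>\<^sub>0 'k) dvd mono a"
        "(mono b' :: ('e \<Rightarrow>\<^sub>0 nat) \<Rightarrow>\<^sub>0 'k) dvd mono b"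
        unfolding primitive_pair_def using binom_in_T[where 'k='k] by blast
      from ab'(4,5) obtain c d where cd: "a = a' + c" "b = b' + d"
        unfolding mono_dvd by blast
      have dab: "toric_deg E a' = toric_deg E b'" using ab'(3) binom_in_T by blast
      have dcd: "toric_deg E c = toric_deg E d"
        using less.prems cd dab by (simp add: deg_add)
      have "c \<noteq> 0 \<or> d \<noteq> 0" using ab'(2) cd by auto
      then have "sz c + sz d > 0" by (metis add_gr_0 sz_pos)
      then have s1: "sz a' + sz b' < sz a + sz b" using cd by (simp add: sz_add)
      have "a' \<noteq> 0 \<or> b' \<noteq> 0" using ab'(1) by auto
      then have "sz a' + sz b' > 0" by (metis add_gr_0 sz_pos)
      then have s2: "sz c + sz d < sz a + sz b" using cd by (simp add: sz_add)
      have eq: "(mono a - mono b :: (('e \<Rightarrow>\<^sub>0 nat) \<Rightarrow>\<^sub>0 'k::field)) =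
        mono c * (mono a' - mono b') + mono b' * (mono c - mono d)"
        using cd by (simp add: right_diff_distrib mono_mult add.commute)
      have "(mono a' - mono b' :: (('e \<Rightarrow>\<^sub>0 nat) \<Rightarrow>\<^sub>0 'k::field)) \<in> rm.span (graver_basis E)"
        using less.hyps[OF s1 dab] .
      moreover have "(mono c - mono d :: (('e \<Rightarrow>\<^sub>0 nat) \<Rightarrow>\<^sub>0 'k::field)) \<in> rm.span (graver_basis E)"
        using less.hyps[OF s2 dcd] .
      ultimately show ?thesis unfolding eq by (intro rm.span_add rm.span_scale)
    qed
  qed
qed

lemma T_span:
  fixes E :: "'e::finite \<Rightarrow> 'v::finite set" and p :: "('e \<Rightarrow>\<^sub>0 nat) \<Rightarrow>\<^sub>0 'k::field"
  shows "p \<in> toric_ideal E \<Longrightarrow> p \<in> rm.span (graver_basis E)"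
proof (induction "card (Poly_Mapping.keys p)" arbitrary: p rule: less_induct)
  case less
  show ?case
  proof (cases "p = 0")
    case True then show ?thesis by (simp add: rm.span_zero)
  next
    case False
    then obtain a where a: "a \<in> Poly_Mapping.keys p" by (metis keys_eq_empty ex_in_conv)
    have z: "Poly_Mapping.lookup (toric_map E p) (toric_deg E a) = 0"
      using less.prems by (simp add: toric_ideal_def)
    have "\<exists>b\<in>Poly_Mapping.keys p. b \<noteq> a \<and> toric_deg E b = toric_deg E a"
    proof (rule ccontr)
      assume nb: "\<not> ?thesis"
      have "Poly_Mapping.lookup (toric_map E p) (toric_deg E a) =
        (\<Sum>x\<in>Poly_Mapping.keys p. if toric_deg E x = toric_deg E a then Poly_Mapping.lookup p x else 0)"
        by (rule lookup_tm) auto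
      also have "\<dots> = Poly_Mapping.lookup p a"
        using a nb by (subst sum.remove[OF finite_keys a]) (auto intro!: sum.neutral)
      finally show False using z a by (simp add: in_keys_iff)
    qed
    then obtain b where b: "b \<in> Poly_Mapping.keys p" "b \<noteq> a" "toric_deg E b = toric_deg E a" by blast
    define q :: "('e \<Rightarrow>\<^sub>0 nat) \<Rightarrow>\<^sub>0 'k" where
      "q = Poly_Mapping.single 0 (Poly_Mapping.lookup p a) * (mono a - mono b)"
    have bT: "(mono a - mono b :: ('e \<Rightarrow>\<^sub>0 nat) \<Rightarrow>\<^sub>0 'k) \<in> toric_ideal E"
      using b binom_in_T by metis
    have qT: "q \<in> toric_ideal E" unfolding q_def
      using T_subspace bT by (metis rm.subspace_scale)
    have qs: "q \<in> rm.span (graver_basis E)" unfolding q_def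
      using binom_span[of E a b] b by (intro rm.span_scale) simp
    have qe: "q = Poly_Mapping.single a (Poly_Mapping.lookup p a) - Poly_Mapping.single b (Poly_Mapping.lookup p a)"
      unfolding q_def mono_def by (simp add: right_diff_distrib mult_single)
    have pT: "p - q \<in> toric_ideal E" using less.prems qT T_subspace by (metis rm.subspace_diff)
    have "Poly_Mapping.keys (p - q) \<subseteq> Poly_Mapping.keys p - {a}"
      using b by (auto simp: qe in_keys_iff lookup_minus lookup_single when_def split: if_splits)
    then have "Poly_Mapping.keys (p - q) \<subset> Poly_Mapping.keys p" using a by blast
    then have "card (Poly_Mapping.keys (p - q)) < card (Poly_Mapping.keys p)"
      by (simp add: psubset_card_mono)
    then have "p - q \<in> rm.span (graver_basis E)" using less.hyps pT by blast
    then have "p - q + q \<in> rm.span (graver_basis E)" using qs by (rule rm.span_add)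
    then show ?thesis by simp
  qed
qed

lemma G_sub_T: "graver_basis E \<subseteq> toric_ideal E"
  unfolding graver_basis_def primitive_pair_def by blast

lemma gen_G: "ideal_gen (graver_basis E :: (('e::finite \<Rightarrow>\<^sub>0 nat) \<Rightarrow>\<^sub>0 'k::field) set) = toric_ideal E"
  unfolding ideal_gen_span
  using T_span rm.span_minimal[OF G_sub_T T_subspace] by blast


lemma prim_disj:
  fixes E :: "'e::finite \<Rightarrow> 'v::finite set"
  assumes prim: "primitive_pair E a b TYPE('k::field)"
  shows "Poly_Mapping.lookup a e = 0 \<or> Poly_Mapping.lookup b e = 0"
proof (rule ccontr)
  assume "\<not> ?thesis"
  then have pos: "Poly_Mapping.lookup a e > 0" "Poly_Mapping.lookup b e > 0" by auto
  define a' where "a' = a - Poly_Mapping.single e 1"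
  define b' where "b' = b - Poly_Mapping.single e 1"
  have ea: "a = a' + Poly_Mapping.single e 1" unfolding a'_def
    by (rule poly_mapping_eqI) (use pos in \<open>auto simp: lookup_add lookup_minus lookup_single when_def\<close>)
  have eb: "b = b' + Poly_Mapping.single e 1" unfolding b'_def
    by (rule poly_mapping_eqI) (use pos in \<open>auto simp: lookup_add lookup_minus lookup_single when_def\<close>)
  have ab: "a \<noteq> b" and abT: "(mono a - mono b :: ('e \<Rightarrow>\<^sub>0 nat) \<Rightarrow>\<^sub>0 'k) \<in> toric_ideal E"
    using prim unfolding primitive_pair_def by auto
  have "a' \<noteq> b'" using ab ea eb by auto
  moreover have "a' \<noteq> a"
  proof
    assume "a' = a"
    have "Poly_Mapping.lookup a e = Poly_Mapping.lookup (a' + Poly_Mapping.single e 1) e"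
      using arg_cong[OF ea, of "\<lambda>x. Poly_Mapping.lookup x e"] .
    then have "Poly_Mapping.lookup a e = Poly_Mapping.lookup a e + 1"
      using \<open>a' = a\<close> by (simp add: lookup_add)
    then show False by simp
  qed
  moreover have "toric_deg E a' = toric_deg E b'"
    using abT ea eb by (simp add: binom_in_T deg_add)
  then have "(mono a' - mono b' :: ('e \<Rightarrow>\<^sub>0 nat) \<Rightarrow>\<^sub>0 'k) \<in> toric_ideal E"
    by (simp add: binom_in_T)
  moreover have "(mono a' :: ('e \<Rightarrow>\<^sub>0 nat) \<Rightarrow>\<^sub>0 'k) dvd mono a"
    "(mono b' :: ('e \<Rightarrow>\<^sub>0 nat) \<Rightarrow>\<^sub>0 'k) dvd mono b"
    using ea eb by (auto simp: mono_dvd)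
  ultimately show False using prim unfolding primitive_pair_def by blast
qed

lemma prim_fiber:
  fixes E :: "'e::finite \<Rightarrow> 'v::finite set"
  assumes up: "uniform_partite k E P" and ik: "i < k"
    and dv: "\<forall>v\<in>P i. card {e. v \<in> E e} = 2"
    and prim: "primitive_pair E a b TYPE('k::field)"
    and dc: "toric_deg E c = toric_deg E a"
  shows "c = a \<or> c = b"
proof -
  have ab: "a \<noteq> b" and abT: "(mono a - mono b :: ('e \<Rightarrow>\<^sub>0 nat) \<Rightarrow>\<^sub>0 'k) \<in> toric_ideal E"
    using prim unfolding primitive_pair_def by auto
  have dab: "toric_deg E a = toric_deg E b" using abT binom_in_T by blast
  have le: "Poly_Mapping.lookup c e \<le> Poly_Mapping.lookup a e + Poly_Mapping.lookup b e" for e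
  proof -
    have "card (E e \<inter> P i) = 1" using up ik unfolding uniform_partite_def by blast
    then obtain v where v: "v \<in> E e" "v \<in> P i" by (metis card_1_singletonE Int_iff insertI1)
    then have "card {e. v \<in> E e} = 2" using dv by blast
    then obtain e1 e2 where e12: "{e. v \<in> E e} = {e1, e2}" "e1 \<noteq> e2" by (auto simp: card_2_iff)
    have "e \<in> {e. v \<in> E e}" using v by simp
    then obtain e' where e': "{x. v \<in> E x} = {e, e'}" "e \<noteq> e'" using e12 by auto
    have sm: "Poly_Mapping.lookup (toric_deg E x) v = Poly_Mapping.lookup x e + Poly_Mapping.lookup x e'" for x
      unfolding lookup_deg e'(1) using e'(2) by simp
    have s1: "Poly_Mapping.lookup a e + Poly_Mapping.lookup a e' = Poly_Mapping.lookup b e + Poly_Mapping.lookup b e'"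
      using sm[of a] sm[of b] dab by simp
    have s2: "Poly_Mapping.lookup c e + Poly_Mapping.lookup c e' = Poly_Mapping.lookup a e + Poly_Mapping.lookup a e'"
      using sm[of a] sm[of c] dc by simp
    show ?thesis using s1 s2 prim_disj[OF prim, of e] prim_disj[OF prim, of e'] by linarith
  qed
  show ?thesis
  proof (rule ccontr)
    assume nc: "\<not> ?thesis"
    define a' where "a' = a - c"
    define b' where "b' = c - a"
    have ea: "\<exists>d. a = a' + d" unfolding a'_def
      by (rule exI[of _ "a - (a - c)"], rule poly_mapping_eqI) (simp add: lookup_add lookup_minus)
    have eb: "\<exists>d. b = b' + d" unfolding b'_def
    proof (rule exI[of _ "b - (c - a)"], rule poly_mapping_eqI)
      fix x
      show "Poly_Mapping.lookup b x = Poly_Mapping.lookup (c - a + (b - (c - a))) x"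
        using le[of x] by (simp add: lookup_add lookup_minus)
    qed
    have em: "a' + c = b' + a" unfolding a'_def b'_def
      by (rule poly_mapping_eqI) (auto simp: lookup_add lookup_minus)
    have "toric_deg E a' = toric_deg E b'"
      using arg_cong[OF em, of "toric_deg E"] dc by (simp add: deg_add)
    then have T: "(mono a' - mono b' :: ('e \<Rightarrow>\<^sub>0 nat) \<Rightarrow>\<^sub>0 'k) \<in> toric_ideal E"
      by (simp add: binom_in_T)
    have d1: "(mono a' :: ('e \<Rightarrow>\<^sub>0 nat) \<Rightarrow>\<^sub>0 'k) dvd mono a"
      "(mono b' :: ('e \<Rightarrow>\<^sub>0 nat) \<Rightarrow>\<^sub>0 'k) dvd mono b"
      using ea eb unfolding mono_dvd by simp_all
    have n1: "a' \<noteq> b'"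
    proof
      assume "a' = b'"
      then have "\<forall>x. Poly_Mapping.lookup a x - Poly_Mapping.lookup c x = Poly_Mapping.lookup c x - Poly_Mapping.lookup a x"
        unfolding a'_def b'_def by (metis lookup_minus)
      then have "a = c"
      proof (intro poly_mapping_eqI)
        fix x
        have "Poly_Mapping.lookup a x - Poly_Mapping.lookup c x = Poly_Mapping.lookup c x - Poly_Mapping.lookup a x"
          using \<open>\<forall>x. _\<close> by blast
        then show "Poly_Mapping.lookup a x = Poly_Mapping.lookup c x" by linarith
      qed
      then show False using nc by simp
    qed
    have n2: "(a', b') \<noteq> (a, b)"
    proof
      assume "(a', b') = (a, b)"
      then have h: "a - c = a" "c - a = b" unfolding a'_def b'_def by auto
      have "c = b"
      proof (rule poly_mapping_eqI)
        fix x
        have "Poly_Mapping.lookup a x - Poly_Mapping.lookup c x = Poly_Mapping.lookup a x"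
          "Poly_Mapping.lookup c x - Poly_Mapping.lookup a x = Poly_Mapping.lookup b x"
          using h by (metis lookup_minus)+
        then show "Poly_Mapping.lookup c x = Poly_Mapping.lookup b x" by linarith
      qed
      then show False using nc by simp
    qed
    show False using prim n1 n2 T d1 unfolding primitive_pair_def by blast
  qed
qed


lemma indisp:
  fixes E :: "'e::finite \<Rightarrow> 'v::finite set" and S :: "(('e \<Rightarrow>\<^sub>0 nat) \<Rightarrow>\<^sub>0 'k::field) set"
  assumes up: "uniform_partite k E P" and ik: "i < k"
    and dv: "\<forall>v\<in>P i. card {e. v \<in> E e} = 2"
    and prim: "primitive_pair E a b TYPE('k)"
    and S: "S \<subseteq> binomials \<inter> toric_ideal E"
    and g: "(mono a - mono b :: ('e \<Rightarrow>\<^sub>0 nat) \<Rightarrow>\<^sub>0 'k) \<in> rm.span S"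
  shows "(mono a - mono b :: ('e \<Rightarrow>\<^sub>0 nat) \<Rightarrow>\<^sub>0 'k) \<in> S \<or> - (mono a - mono b) \<in> S"
proof (rule ccontr)
  assume nS: "\<not> ?thesis"
  have ab: "a \<noteq> b" using prim unfolding primitive_pair_def by auto
  have pno: "(a', b') = (a, b)" if "a' \<noteq> b'" "(mono a' - mono b' :: ('e \<Rightarrow>\<^sub>0 nat) \<Rightarrow>\<^sub>0 'k) \<in> toric_ideal E"
     "(mono a' :: ('e \<Rightarrow>\<^sub>0 nat) \<Rightarrow>\<^sub>0 'k) dvd mono a" "(mono b' :: ('e \<Rightarrow>\<^sub>0 nat) \<Rightarrow>\<^sub>0 'k) dvd mono b" for a' b'
    using prim that unfolding primitive_pair_def by blast
  from g obtain t r where t: "finite t" "t \<subseteq> S"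
    and geq: "(mono a - mono b :: ('e \<Rightarrow>\<^sub>0 nat) \<Rightarrow>\<^sub>0 'k) = (\<Sum>s\<in>t. r s * s)"
    unfolding rm.span_explicit by blast
  have l1: "Poly_Mapping.lookup (mono a - mono b :: ('e \<Rightarrow>\<^sub>0 nat) \<Rightarrow>\<^sub>0 'k) a = 1"
    using ab by (simp add: mono_def lookup_minus lookup_single)
  have each: "Poly_Mapping.lookup (r s * s) a = 0" if st: "s \<in> t" for s
  proof (rule ccontr)
    assume nz: "Poly_Mapping.lookup (r s * s) a \<noteq> 0"
    have sS: "s \<in> S" using st t by blast
    then have "s \<in> binomials" "s \<in> toric_ideal E" using S by auto
    then obtain a' b' where s: "s = mono a' - mono b'" "a' \<noteq> b'" unfolding binomials_def by blast
    have dab': "toric_deg E a' = toric_deg E b'" using \<open>s \<in> toric_ideal E\<close> s binom_in_T by blast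
    have "a \<in> Poly_Mapping.keys (r s * s)" using nz by (simp add: in_keys_iff)
    then obtain y z where yz: "a = y + z" "z \<in> Poly_Mapping.keys s"
      using keys_mult[of "r s" s] by blast
    have "z = a' \<or> z = b'" using yz(2) s
      by (auto simp: in_keys_iff mono_def lookup_minus lookup_single when_def split: if_splits)
    then show False
    proof
      assume za: "z = a'"
      have "toric_deg E (y + b') = toric_deg E a" using yz za dab' by (simp add: deg_add)
      then have "y + b' = a \<or> y + b' = b" using prim_fiber[OF up ik dv prim] by blast
      moreover have "y + b' \<noteq> a" using yz za s(2) by auto
      ultimately have yb: "b = b' + y" by (simp add: add.commute)
      have "(mono a' - mono b' :: ('e \<Rightarrow>\<^sub>0 nat) \<Rightarrow>\<^sub>0 'k) \<in> toric_ideal E"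
        using dab' by (simp add: binom_in_T)
      moreover have "(mono a' :: ('e \<Rightarrow>\<^sub>0 nat) \<Rightarrow>\<^sub>0 'k) dvd mono a"
        "(mono b' :: ('e \<Rightarrow>\<^sub>0 nat) \<Rightarrow>\<^sub>0 'k) dvd mono b"
        unfolding mono_dvd using yz za yb by (metis add.commute)+
      ultimately have "(a', b') = (a, b)" using pno[of a' b'] s(2) by blast
      then show False using nS sS s by simp
    next
      assume zb: "z = b'"
      have "toric_deg E (y + a') = toric_deg E a" using yz zb dab' by (simp add: deg_add)
      then have "y + a' = a \<or> y + a' = b" using prim_fiber[OF up ik dv prim] by blast
      moreover have "y + a' \<noteq> a" using yz zb s(2) by auto
      ultimately have ya: "b = a' + y" by (simp add: add.commute)
      have "(mono b' - mono a' :: ('e \<Rightarrow>\<^sub>0 nat) \<Rightarrow>\<^sub>0 'k) \<in> toric_ideal E"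
        using dab' by (simp add: binom_in_T)
      moreover have "(mono b' :: ('e \<Rightarrow>\<^sub>0 nat) \<Rightarrow>\<^sub>0 'k) dvd mono a"
        "(mono a' :: ('e \<Rightarrow>\<^sub>0 nat) \<Rightarrow>\<^sub>0 'k) dvd mono b"
        unfolding mono_dvd using yz zb ya by (metis add.commute)+
      ultimately have "(b', a') = (a, b)" using pno[of b' a'] s(2) by blast
      then show False using nS sS s by simp
    qed
  qed
  have "Poly_Mapping.lookup (mono a - mono b :: ('e \<Rightarrow>\<^sub>0 nat) \<Rightarrow>\<^sub>0 'k) a = 0"
    unfolding geq lookup_sum using each by simp
  then show False using l1 by simp
qed

theorem proposition4p6:
  fixes k :: nat
    and E :: "'e::finite \<Rightarrow> 'v::finite set"
    and P :: "nat \<Rightarrow> 'v set"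
  assumes "hypergraph E"
    and "uniform_partite k E P"
    and "\<exists>i<k. \<forall>v\<in>P i. card {e. v \<in> E e} = 2"
  shows "unique_minimal_generating_set (graver_basis E :: (('e \<Rightarrow>\<^sub>0 nat) \<Rightarrow>\<^sub>0 'k::field) set)
           (toric_ideal E) binomials"
proof -
  obtain i where ik: "i < k" and dv: "\<forall>v\<in>P i. card {e. v \<in> E e} = 2" using assms(3) by blast
  note up = assms(2)
  let ?G = "graver_basis E :: (('e \<Rightarrow>\<^sub>0 nat) \<Rightarrow>\<^sub>0 'k::field) set"
  let ?T = "toric_ideal E :: (('e \<Rightarrow>\<^sub>0 nat) \<Rightarrow>\<^sub>0 'k::field) set"
  have Gform: "\<exists>a b. g = mono a - mono b \<and> primitive_pair E a b TYPE('k)" if "g \<in> ?G" for g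
    using that unfolding graver_basis_def by blast
  have GB: "?G \<subseteq> binomials \<inter> ?T"
  proof
    fix g assume gG: "g \<in> ?G"
    obtain a b where g: "g = mono a - mono b" and prim: "primitive_pair E a b TYPE('k)"
      using Gform[OF gG] by blast
    have "a \<noteq> b" using prim unfolding primitive_pair_def by simp
    then have "g \<in> binomials" unfolding binomials_def g by blast
    moreover have "g \<in> ?T" using gG G_sub_T by blast
    ultimately show "g \<in> binomials \<inter> ?T" by simp
  qed
  have genG: "rm.span ?G = ?T" using gen_G unfolding ideal_gen_span .
  have c2: "ideal_gen (?G - {g, - g}) \<noteq> ?T" if gG: "g \<in> ?G" for g
  proof
    assume h: "ideal_gen (?G - {g, - g}) = ?T"
    obtain a b where g: "g = mono a - mono b" and prim: "primitive_pair E a b TYPE('k)"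
      using Gform[OF gG] by blast
    have sub: "?G - {g, - g} \<subseteq> binomials \<inter> ?T" using GB by blast
    have "g \<in> ?T" using gG GB by blast
    then have "g \<in> rm.span (?G - {g, - g})" using h unfolding ideal_gen_span by simp
    then have "mono a - mono b \<in> rm.span (?G - {g, - g})" using g by simp
    then have "mono a - mono b \<in> ?G - {g, - g} \<or> - (mono a - mono b) \<in> ?G - {g, - g}"
      by (rule indisp[OF up ik dv prim sub])
    then show False using g by simp
  qed
  have c3: "(\<forall>b\<in>B. b \<in> ?G \<or> - b \<in> ?G) \<and> (\<forall>g\<in>?G. g \<in> B \<or> - g \<in> B)"
    if B: "B \<subseteq> binomials" "minimal_generating_set B ?T" for B
  proof -
    have spB: "rm.span B = ?T" and minB: "\<And>B'. B' \<subset> B \<Longrightarrow> rm.span B' \<noteq> ?T"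
      using B(2) unfolding minimal_generating_set_def ideal_gen_span by auto
    have "B \<subseteq> ?T" using spB rm.span_superset by blast
    then have BT: "B \<subseteq> binomials \<inter> ?T" using B(1) by blast
    have hG: "\<forall>g\<in>?G. g \<in> B \<or> - g \<in> B"
    proof
      fix g assume gG: "g \<in> ?G"
      obtain a b where g: "g = mono a - mono b" and prim: "primitive_pair E a b TYPE('k)"
        using Gform[OF gG] by blast
      have "g \<in> ?T" using gG GB by blast
      then have "mono a - mono b \<in> rm.span B" using spB g by simp
      then have "mono a - mono b \<in> B \<or> - (mono a - mono b) \<in> B"
        by (rule indisp[OF up ik dv prim BT])
      then show "g \<in> B \<or> - g \<in> B" using g by simp
    qed
    define B0 where "B0 = {s\<in>B. s \<in> ?G \<or> - s \<in> ?G}"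
    have B0B: "B0 \<subseteq> B" unfolding B0_def by blast
    have "?G \<subseteq> rm.span B0"
    proof
      fix g assume gG: "g \<in> ?G"
      show "g \<in> rm.span B0"
      proof (cases "g \<in> B")
        case True
        then have "g \<in> B0" using gG unfolding B0_def by blast
        then show ?thesis by (rule rm.span_base)
      next
        case False
        then have "- g \<in> B" using hG gG by blast
        then have "- g \<in> B0" using gG unfolding B0_def by simp
        then have "- (- g) \<in> rm.span B0" by (intro rm.span_neg rm.span_base)
        then show ?thesis by simp
      qed
    qed
    then have "rm.span ?G \<subseteq> rm.span B0" by (intro rm.span_minimal rm.subspace_span)
    then have "?T \<subseteq> rm.span B0" using genG by simp
    moreover have "rm.span B0 \<subseteq> ?T" using spB rm.span_mono[OF B0B] by simp
    ultimately have "rm.span B0 = ?T" by blast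
    then have "\<not> B0 \<subset> B" using minB by blast
    then have "B0 = B" using B0B by blast
    then have "\<forall>b\<in>B. b \<in> ?G \<or> - b \<in> ?G" unfolding B0_def by blast
    then show ?thesis using hG by blast
  qed
  show ?thesis unfolding unique_minimal_generating_set_def
  proof (intro conjI)
    show "ideal_gen ?G = ?T" by (rule gen_G)
    show "\<forall>g\<in>?G. ideal_gen (?G - {g, - g}) \<noteq> ?T" using c2 by blast
    show "\<forall>B. B \<subseteq> binomials \<and> minimal_generating_set B ?T \<longrightarrow>
        (\<forall>b\<in>B. b \<in> ?G \<or> - b \<in> ?G) \<and> (\<forall>g\<in>?G. g \<in> B \<or> - g \<in> B)"
      using c3 by blast
  qed
qed

end
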